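(* Let $b(\lambda)=\frac14\lambda^4+\frac12p\lambda^2+q\lambda$ with $p<0$, $q\in\mathbb{R}$, let $b^*(\eta)=\sup_{\lambda}[\eta\lambda-b(\lambda)]$, and $A(x,r,\eta)=b(x)+b(r)-\eta(x+r)+2b^*(\eta)$. Fix $x$ with $|x|>\sqrt{-p}$ and let $\eta_0=x^3+px+q$ (the unique $\eta$ at which $\lambda\mapsto\eta\lambda-b(\lambda)$ attains its global maximum at $\lambda=x$). Then for all $\eta\in\mathbb{R}$, $$A(x,x,\eta)\approx(\eta-\eta_0)^2(1+|\eta|)^{-2/3},$$ with implied constants independent of $\eta$.
   Context: $X\approx Y$ means $cY\le X\le c^{-1}Y$ for some $c>0$ independent of $\eta$ (it may depend on $x,p,q$). *)

theory Defs
  imports Complex_Main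
begin

definition bfun :: "real \<Rightarrow> real \<Rightarrow> real \<Rightarrow> real" where
  "bfun p q l = (1/4) * l^4 + (1/2) * p * l^2 + q * l"

definition bstar :: "real \<Rightarrow> real \<Rightarrow> real \<Rightarrow> real" where
  "bstar p q \<eta> = (SUP l::real. \<eta> * l - bfun p q l)"

definition Afun :: "real \<Rightarrow> real \<Rightarrow> real \<Rightarrow> real \<Rightarrow> real \<Rightarrow> real" where
  "Afun p q x r \<eta> = bfun p q x + bfun p q r - \<eta> * (x + r) + 2 * bstar p q \<eta>"

end

theory Submission
  imports Defs
begin
lemma key: "\<eta> * l - bfun p q l - (\<eta> * x - bfun p q x) = (\<eta> - (x^3+p*x+q))*(l-x) - (l-x)^2*(((l+x)^2 + 2*x^2+2*p)/4)"
  unfolding bfun_def by (simp add: algebra_simps power2_eq_square power3_eq_cube power4_eq_xxxx add_divide_distrib diff_divide_distrib)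
lemma M3: fixes y::real assumes "y > 0" shows "(y powr (1/3))^3 = y"
proof -
  have "(y powr (1/3))^3 = (y powr (1/3)) powr (real 3)" using assms by (subst powr_realpow) auto
  also have "\<dots> = y powr (1/3 * real 3)" by (rule powr_powr)
  also have "\<dots> = y" using assms by simp
  finally show ?thesis .
qed
lemma M2: fixes y::real assumes "y > 0" shows "y powr (-2/3) = 1/(y powr (1/3))^2"
proof -
  have "(y powr (1/3))^2 = (y powr (1/3)) powr (real 2)" using assms by (subst powr_realpow) auto
  also have "\<dots> = y powr (1/3 * real 2)" by (rule powr_powr)
  also have "1/3 * real 2 = (2/3::real)" by simp
  finally have h1: "(y powr (1/3))^2 = y powr (2/3)" .
  have "-2/3 = - (2/3::real)" by simp
  then have h2: "y powr (-2/3) = inverse (y powr (2/3))" using powr_minus[of y "2/3"] by metis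
  show ?thesis unfolding h1 h2 by (rule inverse_eq_divide)
qed
lemma glow: fixes x p t :: real assumes d: "x^2+p > 0" and p: "p < 0"
  shows "((t+2*x)^2 + 2*x^2+2*p)/4 \<ge> ((x^2+p)/(8*(4*x^2+1))) * (1 + t^2)"
proof -
  define \<delta> where "\<delta> = x^2+p"
  define lam where "lam = \<delta>/(4*x^2+1)"
  have dp: "\<delta> > 0" using d by (simp add: \<delta>_def)
  have xx: "0 \<le> x^2" by simp
  have x1: "4*x^2+1 > 0" using xx by argo
  have l0: "0 < lam" using dp x1 by (simp add: lam_def)
  have h2: "lam*(4*x^2+1) = \<delta>" using x1 by (simp add: lam_def)
  have e: "(t+2*x)^2 - (t^2/2 - 4*x^2) = (t+4*x)^2/2" by (simp add: power2_eq_square algebra_simps)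
  have "0 \<le> (t+4*x)^2/2" by simp
  then have h0: "(t+2*x)^2 \<ge> t^2/2 - 4*x^2" using e by argo
  have "\<delta> \<le> 4*x^2+1" using p xx unfolding \<delta>_def by argo
  then have l1: "lam \<le> 1" using x1 unfolding lam_def by simp
  have h1: "(t+2*x)^2 \<ge> lam*(t^2/2 - 4*x^2)"
  proof -
    have "lam*(t^2/2 - 4*x^2) \<le> lam*(t+2*x)^2" using h0 l0 by (simp add: mult_left_mono)
    also have "\<dots> \<le> (t+2*x)^2" using l1 l0 by (intro mult_left_le_one_le) auto
    finally show ?thesis .
  qed
  have "lam*(t^2/2 - 4*x^2) = lam*t^2/2 - lam*(4*x^2)" by (simp add: algebra_simps)
  moreover have "lam*(4*x^2) = \<delta> - lam" using h2 by (simp add: algebra_simps)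
  ultimately have "(t+2*x)^2 \<ge> lam*t^2/2 - \<delta> + lam" using h1 by argo
  then have "((t+2*x)^2 + 2*x^2+2*p)/4 \<ge> (lam*t^2/2 + \<delta> + lam)/4" unfolding \<delta>_def by argo
  moreover have "lam*t^2 \<ge> 0" using l0 by simp
  moreover have "(lam/8)*(1+t^2) = lam/8 + lam*t^2/8" by (simp add: algebra_simps)
  ultimately have "((t+2*x)^2 + 2*x^2+2*p)/4 \<ge> (lam/8)*(1+t^2)" using dp l0 by argo
  then show ?thesis by (simp add: lam_def \<delta>_def)
qed
lemma gup: fixes x p t :: real assumes "p < 0"
  shows "((t+2*x)^2 + 2*x^2+2*p)/4 \<le> (1+3*x^2) * (1 + t^2)"
proof -
  have e: "2*t^2 + 8*x^2 - (t+2*x)^2 = (t-2*x)^2" by (simp add: power2_eq_square algebra_simps)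
  have "0 \<le> (t-2*x)^2" by simp
  then have "(t+2*x)^2 \<le> 2*t^2 + 8*x^2" using e by argo
  moreover have "0 \<le> x^2 * t^2" by simp
  moreover have "(1+3*x^2) * (1 + t^2) = 1 + t^2 + 3*x^2 + 3*(x^2*t^2)" by (simp add: algebra_simps)
  moreover have "0 \<le> t^2" "0 \<le> x^2" by simp_all
  ultimately show ?thesis using assms by argo
qed
lemma ub:
  fixes a K M e s k :: real
  assumes a: "a > 0" and K: "K \<ge> 1" and M: "M \<ge> 1" and e0: "e \<ge> 0" and eK: "e \<le> K*M^3"
    and c1: "e \<le> 1 \<Longrightarrow> M^3 \<le> 2*K" and c2: "e \<ge> 1 \<Longrightarrow> M^3 \<le> 2*K*e"
    and s: "s \<ge> 0" and k: "k = max 1 (K/a)"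
  shows "e*s - a*(s^2+s^4) \<le> (2*K*k + K/(2*a)) * e^2/M^2"
proof -
  have M2: "M^2 > 0" using M by simp
  have k1: "k \<ge> 1" using k by simp
  have r1: "0 \<le> 2*K*k*e^2/M^2" using K k1 M2 by simp
  have r2: "0 \<le> K/(2*a)*e^2/M^2" using K a M2 by simp
  have rhs: "(2*K*k + K/(2*a)) * e^2/M^2 = 2*K*k*e^2/M^2 + K/(2*a)*e^2/M^2"
    using M2 a by (simp add: field_simps)
  have s4: "a*s^4 \<ge> 0" using a s by simp
  show ?thesis
  proof (cases "e \<le> 1")
    case True
    have "0 \<le> (2*a*s - e)^2" by simp
    then have "4*a*(e*s) \<le> 4*a*(a*s^2) + e^2" by (simp add: power2_eq_square algebra_simps)
    then have h: "e*s \<le> a*s^2 + e^2/(4*a)" using a by (simp add: field_simps)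
    have "M^2 \<le> M^3" using M by (simp add: power_increasing)
    with c1[OF True] have MM: "M^2 \<le> 2*K" by simp
    have "e^2/(4*a) = e^2*M^2/(4*a*M^2)" using M2 by simp
    also have "\<dots> \<le> e^2*(2*K)/(4*a*M^2)"
      using MM a M2 by (intro divide_right_mono mult_left_mono) auto
    also have "\<dots> = K/(2*a)*e^2/M^2" by (simp add: field_simps)
    finally have "e^2/(4*a) \<le> K/(2*a)*e^2/M^2" .
    then show ?thesis using h s4 r1 r2 rhs by argo
  next
    case False
    then have e1: "e \<ge> 1" by simp
    show ?thesis
    proof (cases "s \<le> k*M")
      case True
      have "e*s \<le> e*(k*M)" using True e0 by (simp add: mult_left_mono)
      also have "\<dots> = k*e*M^3/M^2" using M2 by (simp add: power2_eq_square power3_eq_cube field_simps)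
      also have "\<dots> \<le> k*e*(2*K*e)/M^2" using c2[OF e1] k1 e0 M2
        by (intro divide_right_mono mult_left_mono) auto
      also have "\<dots> = 2*K*k*e^2/M^2" by (simp add: power2_eq_square)
      finally have "e*s \<le> 2*K*k*e^2/M^2" .
      moreover have "a*s^2 \<ge> 0" using a by simp
      ultimately show ?thesis using s4 r2 rhs by argo
    next
      case False
      then have sk: "k*M \<le> s" by simp
      have "(k*M)^3 \<le> s^3" using sk k1 M by (intro power_mono) auto
      moreover have "k \<le> k^3" using power_increasing[of 1 3 k] k1 by simp
      moreover have "k \<ge> K/a" using k by simp
      ultimately have "K/a \<le> k^3" "(k*M)^3 \<le> s^3" by linarith+
      then have "(K/a)*M^3 \<le> k^3*M^3" using M by (intro mult_right_mono) auto
      then have "s^3 \<ge> (K/a)*M^3" using \<open>(k*M)^3 \<le> s^3\<close> by (simp add: power_mult_distrib)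
      then have "a*s^3 \<ge> K*M^3" using a by (simp add: field_simps)
      then have "a*s^3 \<ge> e" using eK by simp
      then have "(a*s^3)*s \<ge> e*s" using s by (simp add: mult_right_mono)
      moreover have "(a*s^3)*s = a*s^4" by (simp add: eval_nat_numeral)
      ultimately have "a*s^4 \<ge> e*s" by simp
      moreover have "a*s^2 \<ge> 0" using a by simp
      ultimately show ?thesis using r1 r2 rhs by argo
    qed
  qed
qed
lemma lb:
  fixes C K M e s C' :: real
  assumes C: "C \<ge> 1" and K: "K \<ge> 1" and M: "M \<ge> 1" and e0: "e \<ge> 0" and eK: "e \<le> K*M^3"
    and C': "C' = C*K^2" and s: "s = e/(4*C'*M^2)"
  shows "e*s - C*(s^2+s^4) \<ge> e^2/(8*C'*M^2)"
proof -
  have K2: "K^2 \<ge> 1" using K by (simp add: one_le_power)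
  have C'1: "C' \<ge> 1" 
  proof -
    have "1*1 \<le> C*K^2" using C K2 by (intro mult_mono) auto
    then show ?thesis using C' by simp
  qed
  have CC': "C \<le> C'" 
  proof -
    have "C*1 \<le> C*K^2" using C K2 by (intro mult_left_mono) auto
    then show ?thesis using C' by simp
  qed
  have M2: "M^2 > 0" using M by simp
  define X where "X = e^2/(16*C'*M^2)"
  have X0: "X \<ge> 0" using C'1 M2 by (simp add: X_def)
  have es: "e*s = 4*X" using C'1 M2 by (simp add: X_def s power2_eq_square field_simps)
  have s2: "s^2 = e^2/(16*C'^2*M^4)" by (simp add: s power2_eq_square power4_eq_xxxx field_simps)
  have "C*s^2 \<le> C'*s^2" using CC' by (simp add: mult_right_mono)
  also have "\<dots> = e^2/(16*C'*M^4)" using C'1 unfolding s2 by (simp add: power2_eq_square field_simps)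
  also have "\<dots> \<le> X" unfolding X_def using C'1 M2 M
    by (intro divide_left_mono mult_left_mono) (auto simp: power_increasing)
  finally have t1: "C*s^2 \<le> X" .
  have s4: "s^4 = (s^2)^2" by simp
  have eq: "C*s^4 = X * (C*e^2/(16*C'^3*M^6))" unfolding s4 s2 X_def using C'1 M2
    by (simp add: power2_eq_square power4_eq_xxxx field_simps eval_nat_numeral)
  have "e^2 \<le> (K*M^3)^2" using e0 eK by (intro power_mono) auto
  then have "C*e^2 \<le> C*(K^2*M^6)" using C by (simp add: power_mult_distrib power_mult[symmetric])
  also have "\<dots> = C'*M^6" by (simp add: C')
  also have "\<dots> \<le> 16*C'^3*M^6" using C'1 M
  proof -
    have "C' \<le> C'^3" using power_increasing[of 1 3 C'] C'1 by simp
    then have "C' \<le> 16*C'^3" using C'1 by argo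
    then show ?thesis using M by (intro mult_right_mono) auto
  qed
  finally have "C*e^2 \<le> 16*C'^3*M^6" .
  then have f1: "C*e^2/(16*C'^3*M^6) \<le> 1" using C'1 M by simp
  have "X * (C*e^2/(16*C'^3*M^6)) \<le> X" using mult_left_le[OF f1 X0] .
  then have t2: "C*s^4 \<le> X" using eq by simp
  have "e^2/(8*C'*M^2) = 2*X" by (simp add: X_def)
  then show ?thesis using es t1 t2 by (simp add: algebra_simps)
qed
theorem corollary6p2:
  fixes p q x :: real
  assumes "p < 0" and "\<bar>x\<bar> > sqrt (- p)"
  shows "\<exists>c>0. \<forall>\<eta>::real.
           c * ((\<eta> - (x^3 + p*x + q))^2 * (1 + \<bar>\<eta>\<bar>) powr (-2/3)) \<le> Afun p q x x \<eta> \<and>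
           Afun p q x x \<eta> \<le> (1/c) * ((\<eta> - (x^3 + p*x + q))^2 * (1 + \<bar>\<eta>\<bar>) powr (-2/3))"
proof -
  have "sqrt (-p) ^2 < \<bar>x\<bar>^2" using assms(1,2) by (intro power_strict_mono) auto
  then have d: "x^2 + p > 0" using assms(1) by simp
  define a where "a = (x^2+p)/(8*(4*x^2+1))"
  have "0 \<le> x^2" by simp
  then have "8*(4*x^2+1) > 0" by argo
  then have a0: "a > 0" unfolding a_def using d by (intro divide_pos_pos)
  define Cg where "Cg = 1+3*x^2"
  have Cg1: "Cg \<ge> 1" by (simp add: Cg_def)
  define \<eta>0 where "\<eta>0 = x^3+p*x+q"
  define K where "K = 1 + \<bar>\<eta>0\<bar>"
  have K1: "K \<ge> 1" by (simp add: K_def)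
  define k where "k = max 1 (K/a)"
  define Cu where "Cu = 2*K*k + K/(2*a)"
  define C' where "C' = Cg*K^2"
  have k1: "k \<ge> 1" by (simp add: k_def)
  have Cu0: "Cu > 0" unfolding Cu_def using K1 k1 a0 by (simp add: add_pos_nonneg)
  have "1 \<le> K^2" using K1 by (simp add: one_le_power)
  then have "1*1 \<le> Cg*K^2" using Cg1 by (intro mult_mono) auto
  then have C'1: "C' \<ge> 1" unfolding C'_def by simp
  define c where "c = min (1/(4*C')) (1/(2*Cu))"
  have c0: "c > 0" using Cu0 C'1 by (simp add: c_def)
  have ic: "1/c \<ge> 2*Cu" using Cu0 C'1 c0 unfolding c_def
    by (simp add: min_def field_simps)
  show ?thesis
  proof (intro exI[of _ c] conjI allI c0)
    fix \<eta> :: real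
    define \<epsilon> where "\<epsilon> = \<eta> - \<eta>0"
    define e where "e = \<bar>\<epsilon>\<bar>"
    define M where "M = (1+\<bar>\<eta>\<bar>) powr (1/3)"
    have M1: "M \<ge> 1" unfolding M_def by (simp add: ge_one_powr_ge_zero)
    have M3: "M^3 = 1+\<bar>\<eta>\<bar>" unfolding M_def by (rule M3) simp
    have T: "(\<eta> - (x^3 + p*x + q))^2 * (1 + \<bar>\<eta>\<bar>) powr (-2/3) = e^2/M^2"
      unfolding M_def e_def \<epsilon>_def \<eta>0_def by (subst M2) auto
    have e0: "e \<ge> 0" by (simp add: e_def)
    have eK: "e \<le> K*M^3"
    proof -
      have "(1+\<bar>\<eta>0\<bar>)*(1+\<bar>\<eta>\<bar>) = 1+\<bar>\<eta>\<bar>+\<bar>\<eta>0\<bar>+\<bar>\<eta>0\<bar>*\<bar>\<eta>\<bar>" by (simp add: algebra_simps)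
      moreover have "0 \<le> \<bar>\<eta>0\<bar>*\<bar>\<eta>\<bar>" by simp
      moreover have "\<bar>\<eta> - \<eta>0\<bar> \<le> \<bar>\<eta>\<bar> + \<bar>\<eta>0\<bar>" by (rule abs_triangle_ineq4)
      ultimately show ?thesis unfolding M3 e_def \<epsilon>_def K_def by argo
    qed
    have tri: "M^3 \<le> 1 + e + \<bar>\<eta>0\<bar>" unfolding M3 e_def \<epsilon>_def
      using abs_triangle_ineq[of "\<eta>-\<eta>0" \<eta>0] by simp
    have c1: "M^3 \<le> 2*K" if "e \<le> 1" using that tri unfolding K_def by argo
    have c2: "M^3 \<le> 2*K*e" if "e \<ge> 1" 
    proof -
      have "\<bar>\<eta>0\<bar> \<le> \<bar>\<eta>0\<bar>*e" using mult_left_mono[OF that, of "\<bar>\<eta>0\<bar>"] by simp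
      moreover have "0 \<le> \<bar>\<eta>0\<bar>*e" using e0 by simp
      moreover have "2*K*e = 2*e + 2*(\<bar>\<eta>0\<bar>*e)" unfolding K_def by (simp add: algebra_simps)
      ultimately show ?thesis using that tri by linarith
    qed
    define bx where "bx = \<eta>*x - bfun p q x"
    have pt: "\<eta>*l - bfun p q l \<le> bx + Cu*e^2/M^2" for l
    proof -
      define t where "t = l - x"
      define g where "g = ((t+2*x)^2 + 2*x^2+2*p)/4"
      have kl: "\<eta>*l - bfun p q l - bx = \<epsilon>*t - t^2*g"
        unfolding bx_def \<epsilon>_def t_def g_def \<eta>0_def using key[of \<eta> l p q x] by (simp add: algebra_simps)
      have gl: "g \<ge> a*(1+t^2)" unfolding g_def a_def by (rule glow[OF d assms(1)])
      have "t^2*g \<ge> t^2*(a*(1+t^2))" using gl by (simp add: mult_left_mono)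
      moreover have "t^2*(a*(1+t^2)) = a*(\<bar>t\<bar>^2+\<bar>t\<bar>^4)" by (simp add: algebra_simps power2_eq_square power4_eq_xxxx)
      moreover have "\<epsilon>*t \<le> e*\<bar>t\<bar>" unfolding e_def by (simp add: abs_mult[symmetric])
      moreover have "e*\<bar>t\<bar> - a*(\<bar>t\<bar>^2+\<bar>t\<bar>^4) \<le> Cu*e^2/M^2"
        unfolding Cu_def by (rule ub[OF a0 K1 M1 e0 eK c1 c2 _ k_def]) auto
      ultimately show ?thesis using kl by linarith
    qed
    have bdd: "bdd_above (range (\<lambda>l. \<eta>*l - bfun p q l))"
      using pt by (intro bdd_aboveI2) 
    have bs_up: "bstar p q \<eta> \<le> bx + Cu*e^2/M^2"
      unfolding bstar_def using pt by (intro cSUP_least) auto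
    have bs_lo: "\<eta>*l - bfun p q l \<le> bstar p q \<eta>" for l
      unfolding bstar_def by (rule cSUP_upper[OF UNIV_I bdd])
    define s where "s = e/(4*C'*M^2)"
    have s0: "s \<ge> 0" using e0 C'1 M1 by (simp add: s_def)
    have low: "e^2/(8*C'*M^2) \<le> bstar p q \<eta> - bx"
    proof -
      define t where "t = sgn \<epsilon> * s"
      define l where "l = x + t"
      define g where "g = ((t+2*x)^2 + 2*x^2+2*p)/4"
      have kl: "\<eta>*l - bfun p q l - bx = \<epsilon>*t - t^2*g"
        unfolding bx_def \<epsilon>_def l_def g_def \<eta>0_def using key[of \<eta> "x+t" p q x] by (simp add: algebra_simps)
      have et: "\<epsilon>*t = e*s" unfolding t_def e_def by (simp add: abs_sgn mult.assoc[symmetric])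
      have tt: "t^2 = s^2" unfolding t_def by (cases "\<epsilon> = 0") (auto simp: power_mult_distrib sgn_if s_def e_def)
      have gu: "g \<le> Cg*(1+s^2)" unfolding g_def Cg_def tt[symmetric] by (rule gup[OF assms(1)])
      have "t^2*g \<le> s^2*(Cg*(1+s^2))" using gu tt by (simp add: mult_left_mono)
      moreover have "s^2*(Cg*(1+s^2)) = Cg*(s^2+s^4)" by (simp add: algebra_simps power2_eq_square power4_eq_xxxx)
      moreover have "e*s - Cg*(s^2+s^4) \<ge> e^2/(8*C'*M^2)"
        by (rule lb[OF Cg1 K1 M1 e0 eK C'_def s_def])
      ultimately have "e^2/(8*C'*M^2) \<le> \<eta>*l - bfun p q l - bx" using kl et by linarith
      then show ?thesis using bs_lo[of l] by linarith
    qed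
    have A: "Afun p q x x \<eta> = 2*(bstar p q \<eta> - bx)" unfolding Afun_def bx_def by (simp add: algebra_simps)
    have Tn: "e^2/M^2 \<ge> 0" by simp
    have "c * (e^2/M^2) \<le> (1/(4*C')) * (e^2/M^2)" using Tn by (intro mult_right_mono) (auto simp: c_def)
    also have "\<dots> = 2*(e^2/(8*C'*M^2))" by simp
    also have "\<dots> \<le> Afun p q x x \<eta>" using A low by simp
    finally show "c * ((\<eta> - (x^3 + p*x + q))^2 * (1 + \<bar>\<eta>\<bar>) powr (-2/3)) \<le> Afun p q x x \<eta>" using T by simp
    have "Afun p q x x \<eta> \<le> 2*(Cu*e^2/M^2)" using A bs_up by simp
    also have "\<dots> = (2*Cu)*(e^2/M^2)" by simp
    also have "\<dots> \<le> (1/c)*(e^2/M^2)" using ic Tn by (intro mult_right_mono) auto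
    finally show "Afun p q x x \<eta> \<le> (1/c) * ((\<eta> - (x^3 + p*x + q))^2 * (1 + \<bar>\<eta>\<bar>) powr (-2/3))" using T by simp
  qed
qed
end
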